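(* Let $u,a,b$ be positive integers with $u\le\min(a-1,b)$. Suppose integers $c_{pq},d_{pq}\in[1,a]$ ($1\le p\le u$, $1\le q\le b$) satisfy, for all $p,q$ for which the indices are in range, $$d_{pq}\ge c_{pq},\qquad c_{pq}\ge d_{p,q+1},\qquad c_{pq}>d_{p-1,q}.$$ Then there exist integers $c'_{pq},d'_{pq}$ ($1\le p\le u$, $1\le q\le b$) such that: (i) $d'_{pq}\ge c'_{pq}$ and $c'_{pq}>d'_{p-1,q}$ for all $p,q$ with indices in range; (ii) $c'_{pq}=d'_{p,q+1}$ for $1\le p\le u$, $1\le q\le b-1$; (iii) $d'_{p1}=a-u+p$ and $c'_{pb}=p$ for $1\le p\le u$; (iv) $\bigcup_p([c_{pq},d_{pq}]\cap\mathbb{Z})\subseteq\bigcup_p([c'_{pq},d'_{pq}]\cap\mathbb{Z})$ for each $q=1,\dots,b$; moreover, if this inclusion is an equality for every $q$, then $c_{pq}=c'_{pq}$ and $d_{pq}=d'_{pq}$ for all $p,q$. *)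

theory Defs
  imports Main
begin

definition hyp_ineqs :: "nat \<Rightarrow> nat \<Rightarrow> (nat \<Rightarrow> nat \<Rightarrow> int) \<Rightarrow> (nat \<Rightarrow> nat \<Rightarrow> int) \<Rightarrow> bool" where
  "hyp_ineqs u b c d \<longleftrightarrow>
     (\<forall>p\<in>{1..u}. \<forall>q\<in>{1..b}. d p q \<ge> c p q) \<and>
     (\<forall>p\<in>{1..u}. \<forall>q\<in>{1..b}. q + 1 \<le> b \<longrightarrow> c p q \<ge> d p (q + 1)) \<and>
     (\<forall>p\<in>{1..u}. \<forall>q\<in>{1..b}. 2 \<le> p \<longrightarrow> c p q > d (p - 1) q)"

definition col_union :: "nat \<Rightarrow> (nat \<Rightarrow> nat \<Rightarrow> int) \<Rightarrow> (nat \<Rightarrow> nat \<Rightarrow> int) \<Rightarrow> nat \<Rightarrow> int set" where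
  "col_union u c d q = (\<Union>p\<in>{1..u}. {c p q .. d p q})"

end

theory Submission
  imports Defs
begin

lemma card_col:
  fixes c d :: "nat \<Rightarrow> nat \<Rightarrow> int"
  assumes le: "\<And>p. 1 \<le> p \<Longrightarrow> p \<le> u \<Longrightarrow> c p q \<le> d p q"
      and lt: "\<And>p. 2 \<le> p \<Longrightarrow> p \<le> u \<Longrightarrow> d (p-1) q < c p q"
  shows "int (card (col_union u c d q)) = (\<Sum>p=1..u. d p q - c p q + 1)"
proof -
  have ord: "d p1 q < c p2 q" if "1 \<le> p1" "p1 < p2" "p2 \<le> u" for p1 p2
    using that
  proof (induction p2)
    case 0 then show ?case by simp
  next
    case (Suc m)
    show ?case
    proof (cases "p1 = m")
      case True
      then show ?thesis using lt[of "Suc m"] Suc.prems by simp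
    next
      case False
      then have "p1 < m" using Suc.prems by simp
      then have "d p1 q < c m q" using Suc by simp
      moreover have "c m q \<le> d m q" using le[of m] Suc.prems \<open>p1<m\<close> by simp
      moreover have "d m q < c (Suc m) q" using lt[of "Suc m"] Suc.prems \<open>p1<m\<close> by simp
      ultimately show ?thesis by simp
    qed
  qed
  have disj: "{c p1 q..d p1 q} \<inter> {c p2 q..d p2 q} = {}" if "p1 \<in> {1..u}" "p2 \<in> {1..u}" "p1 \<noteq> p2" for p1 p2
  proof (cases "p1 < p2")
    case True then show ?thesis using ord[of p1 p2] that by auto
  next
    case False then have "p2 < p1" using that by simp
    then show ?thesis using ord[of p2 p1] that by auto
  qed
  have "card (col_union u c d q) = (\<Sum>p=1..u. card {c p q..d p q})"
    unfolding col_union_def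
  proof (rule card_UN_disjoint)
    show "finite {1..u}" by simp
    show "\<forall>i\<in>{1..u}. finite {c i q..d i q}" by simp
    show "\<forall>i\<in>{1..u}. \<forall>j\<in>{1..u}. i \<noteq> j \<longrightarrow> {c i q..d i q} \<inter> {c j q..d j q} = {}"
      using disj by blast
  qed
  then have "int (card (col_union u c d q)) = (\<Sum>p=1..u. int (card {c p q..d p q}))" by simp
  also have "\<dots> = (\<Sum>p=1..u. d p q - c p q + 1)"
  proof (rule sum.cong[OF refl])
    fix p assume "p \<in> {1..u}"
    then have "c p q \<le> d p q" using le by simp
    then show "int (card {c p q..d p q}) = d p q - c p q + 1" by simp
  qed
  finally show ?thesis .
qed

lemma telesc:
  fixes f g :: "nat \<Rightarrow> int"
  shows "(\<Sum>q=1..Suc m. f q - g q + 1) = f 1 - g (Suc m) + int (Suc m) - (\<Sum>q=1..m. g q - f (q+1))"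
  by (induction m) simp_all

lemma telesc':
  fixes f g :: "nat \<Rightarrow> int"
  assumes "1 \<le> n"
  shows "(\<Sum>q=1..n. f q - g q + 1) = f 1 - g n + int n - (\<Sum>q=1..n-1. g q - f (q+1))"
  using telesc[of f g "n-1"] assms by simp

locale cfg =
  fixes u a b :: nat and c d :: "nat \<Rightarrow> nat \<Rightarrow> int"
  assumes u1: "1 \<le> u" and ua: "u \<le> a - 1" and ub: "u \<le> b"
    and cl: "\<And>p q. 1\<le>p \<Longrightarrow> p\<le>u \<Longrightarrow> 1\<le>q \<Longrightarrow> q\<le>b \<Longrightarrow> 1 \<le> c p q"
    and du: "\<And>p q. 1\<le>p \<Longrightarrow> p\<le>u \<Longrightarrow> 1\<le>q \<Longrightarrow> q\<le>b \<Longrightarrow> d p q \<le> int a"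
    and h1: "\<And>p q. 1\<le>p \<Longrightarrow> p\<le>u \<Longrightarrow> 1\<le>q \<Longrightarrow> q\<le>b \<Longrightarrow> c p q \<le> d p q"
    and h2: "\<And>p q. 1\<le>p \<Longrightarrow> p\<le>u \<Longrightarrow> 1\<le>q \<Longrightarrow> q<b \<Longrightarrow> d p (q+1) \<le> c p q"
    and h3: "\<And>p q. 2\<le>p \<Longrightarrow> p\<le>u \<Longrightarrow> 1\<le>q \<Longrightarrow> q\<le>b \<Longrightarrow> d (p-1) q < c p q"
begin

lemma au: "int u \<le> int a" using ua u1 by simp

lemma c_ge: "1\<le>p \<Longrightarrow> p\<le>u \<Longrightarrow> 1\<le>q \<Longrightarrow> q\<le>b \<Longrightarrow> int p \<le> c p q"
proof (induction p)
  case 0 thus ?case by simp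
next
  case (Suc m)
  show ?case
  proof (cases "m = 0")
    case True thus ?thesis using cl[of 1 q] Suc.prems by simp
  next
    case False
    have "int m \<le> c m q" using Suc False by simp
    moreover have "c m q \<le> d m q" using h1[of m q] Suc.prems False by simp
    moreover have "d m q < c (Suc m) q" using h3[of "Suc m" q] Suc.prems False by simp
    ultimately show ?thesis by simp
  qed
qed

lemma d_le_aux: "k \<le> u - 1 \<Longrightarrow> 1\<le>q \<Longrightarrow> q\<le>b \<Longrightarrow> d (u-k) q \<le> int a - int k"
proof (induction k)
  case 0 thus ?case using du[of u q] u1 by simp
next
  case (Suc k)
  define m where "m = u - Suc k"
  have m1: "1 \<le> m" "Suc m \<le> u" "u - k = Suc m" using Suc.prems unfolding m_def by auto
  have "k \<le> u - 1" using Suc.prems by simp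
  then have "d (u-k) q \<le> int a - int k" using Suc.IH Suc.prems by blast
  then have A: "d (Suc m) q \<le> int a - int k" using m1 by simp
  have B: "c (Suc m) q \<le> d (Suc m) q" using h1[of "Suc m" q] Suc.prems m1 by simp
  have C: "d m q < c (Suc m) q" using h3[of "Suc m" q] Suc.prems m1 by simp
  have "d m q \<le> int a - int (Suc k)" using A B C by simp
  then show ?case unfolding m_def by simp
qed

lemma d_le: "1\<le>p \<Longrightarrow> p\<le>u \<Longrightarrow> 1\<le>q \<Longrightarrow> q\<le>b \<Longrightarrow> d p q \<le> int a - int u + int p"
proof -
  assume a1: "1\<le>p" "p\<le>u" "1\<le>q" "q\<le>b"
  have "d (u - (u-p)) q \<le> int a - int (u-p)" using d_le_aux[of "u-p" q] a1 by simp
  moreover have "u - (u-p) = p" using a1 by simp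
  moreover have "int (u-p) = int u - int p" using a1 by simp
  ultimately show ?thesis by simp
qed

lemma d_mono_p: "1 \<le> p' \<Longrightarrow> p' \<le> p \<Longrightarrow> p \<le> u \<Longrightarrow> 1\<le>q \<Longrightarrow> q\<le>b \<Longrightarrow> d p' q \<le> d p q"
proof (induction p)
  case 0 thus ?case by simp
next
  case (Suc m)
  show ?case
  proof (cases "p' = Suc m")
    case True thus ?thesis by simp
  next
    case False
    then have "d p' q \<le> d m q" using Suc by simp
    moreover have "d m q < c (Suc m) q" using h3[of "Suc m" q] Suc.prems False by simp
    moreover have "c (Suc m) q \<le> d (Suc m) q" using h1[of "Suc m" q] Suc.prems by simp
    ultimately show ?thesis by simp
  qed
qed

lemma d_mono_q: "1\<le>p \<Longrightarrow> p\<le>u \<Longrightarrow> 1 \<le> q \<Longrightarrow> q \<le> q' \<Longrightarrow> q' \<le> b \<Longrightarrow> d p q' \<le> d p q"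
proof (induction q')
  case 0 thus ?case by simp
next
  case (Suc m)
  show ?case
  proof (cases "q = Suc m")
    case True thus ?thesis by simp
  next
    case False
    then have "d p m \<le> d p q" using Suc by simp
    moreover have "d p (Suc m) \<le> c p m" using h2[of p m] Suc.prems False by simp
    moreover have "c p m \<le> d p m" using h1[of p m] Suc.prems False by simp
    ultimately show ?thesis by simp
  qed
qed

definition Hf :: "nat \<Rightarrow> nat \<Rightarrow> int" where
  "Hf r q = (if q + u < b + r then int a - int u + int r else int r)"

definition lb :: "nat \<Rightarrow> nat \<Rightarrow> int" where
  "lb r q = max (int r) (max (if q < r then int a - int u + int r else 0)
                              (if q < b then min (Hf r q) (d r (q+1)) else 0))"

definition S :: "nat \<Rightarrow> nat \<Rightarrow> (nat \<times> nat) set" where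
  "S p q = {z \<in> {1..p} \<times> {1..b}. q + fst z \<le> snd z + p}"

definition E :: "nat \<Rightarrow> nat \<Rightarrow> int" where
  "E p q = Max ((\<lambda>z. lb (fst z) (snd z) + int p - int (fst z)) ` S p q)"

definition e :: "nat \<Rightarrow> nat \<Rightarrow> int" where
  "e r k = (if k = 0 then int a - int u + int r else E r k)"

lemma eq1: "q = 1 \<Longrightarrow> e r (q-1) = int a - int u + int r"
  unfolding e_def by simp

lemma eqn: "1 \<le> q \<Longrightarrow> q \<noteq> 1 \<Longrightarrow> e r (q-1) = E r (q-1)"
  unfolding e_def by simp

lemma S_fin: "finite (S p q)"
  unfolding S_def by (rule finite_subset[of _ "{1..p}\<times>{1..b}"]) auto

lemma E_ge: "z \<in> S p q \<Longrightarrow> lb (fst z) (snd z) + int p - int (fst z) \<le> E p q"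
  unfolding E_def by (rule Max_ge) (auto simp: S_fin)

lemma E_in: assumes "1 \<le> p" "q \<le> b"
  shows "\<exists>z\<in>S p q. E p q = lb (fst z) (snd z) + int p - int (fst z)"
proof -
  have "(p,b) \<in> S p q" using assms ub u1 unfolding S_def by auto
  then have "E p q \<in> (\<lambda>z. lb (fst z) (snd z) + int p - int (fst z)) ` S p q"
    unfolding E_def by (intro Max_in) (auto simp: S_fin)
  then show ?thesis by auto
qed

lemma lb_top: "lb r q \<le> int a - int u + int r"
  using au unfolding lb_def Hf_def by auto

lemma lb_low: "b + r \<le> q + u \<Longrightarrow> lb r q \<le> int r"
  using ub unfolding lb_def Hf_def by (auto simp: min_le_iff_disj)

lemma lb_ge1: "int r \<le> lb r q" unfolding lb_def by simp
lemma lb_ge2: "q < r \<Longrightarrow> int a - int u + int r \<le> lb r q" unfolding lb_def by simp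
lemma lb_ge3: "q < b \<Longrightarrow> min (Hf r q) (d r (q+1)) \<le> lb r q" unfolding lb_def by simp

lemma E_top: assumes "1 \<le> p" "q \<le> b" shows "E p q \<le> int a - int u + int p"
proof -
  obtain z where z: "z \<in> S p q" "E p q = lb (fst z) (snd z) + int p - int (fst z)"
    using E_in[of p q] assms by auto
  then show ?thesis using lb_top[of "fst z" "snd z"] by simp
qed

lemma E_b: assumes "1 \<le> p" "p \<le> u" shows "E p b = int p"
proof -
  have "(p,b) \<in> S p b" using assms ub unfolding S_def by auto
  then have "int p \<le> E p b" using E_ge[of "(p,b)" p b] lb_ge1[of p b] by simp
  moreover obtain z where z: "z \<in> S p b" "E p b = lb (fst z) (snd z) + int p - int (fst z)"
    using E_in[of p b] assms by auto
  moreover have "lb (fst z) (snd z) \<le> int (fst z)"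
    using z(1) assms unfolding S_def by (intro lb_low) auto
  ultimately show ?thesis by simp
qed

lemma E_mono: assumes "q+1 \<le> b" "1 \<le> p" shows "E p (q+1) \<le> E p q"
proof -
  obtain z where z: "z \<in> S p (q+1)" "E p (q+1) = lb (fst z) (snd z) + int p - int (fst z)"
    using E_in[of p "q+1"] assms by auto
  have "z \<in> S p q" using z(1) unfolding S_def by auto
  then show ?thesis using E_ge z by simp
qed

lemma E_diag: assumes "2 \<le> p" "2 \<le> q" "q \<le> b" shows "E (p-1) (q-1) + 1 \<le> E p q"
proof -
  obtain z where z: "z \<in> S (p-1) (q-1)" "E (p-1) (q-1) = lb (fst z) (snd z) + int (p-1) - int (fst z)"
    using E_in[of "p-1" "q-1"] assms by fastforce
  have "z \<in> S p q" using z(1) assms unfolding S_def by auto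
  then show ?thesis using E_ge[of z p q] z assms by simp
qed

lemma E_1: assumes "2 \<le> p" shows "int a - int u + int p \<le> E p 1"
proof -
  have "(p,1) \<in> S p 1" using assms ub u1 unfolding S_def by auto
  then show ?thesis using E_ge[of "(p,1)" p 1] lb_ge2[of 1 p] assms by simp
qed

lemma E_lb: "1 \<le> p \<Longrightarrow> 1 \<le> q \<Longrightarrow> q \<le> b \<Longrightarrow> lb p q \<le> E p q"
  using E_ge[of "(p,q)" p q] unfolding S_def by auto


lemma cover:
  assumes pq: "1\<le>p" "p\<le>u" "1\<le>q" "q\<le>b" and x: "c p q \<le> x" "x \<le> d p q"
  shows "\<exists>r\<in>{1..u}. E r q \<le> x \<and> x \<le> e r (q-1)"
proof -
  define P where "P r \<longleftrightarrow> 1 \<le> r \<and> x \<le> e r (q-1)" for r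
  have Pu: "P u"
  proof (cases "q = 1")
    case True
    then show ?thesis using du[of p q] pq x u1 eq1[OF True, of u] unfolding P_def by simp
  next
    case False
    have "lb u (q-1) \<le> E u (q-1)" by (rule E_lb) (use u1 pq False in auto)
    moreover have "min (Hf u (q-1)) (d u (q-1+1)) \<le> lb u (q-1)" using lb_ge3[of "q-1" u] pq by simp
    moreover have "q - 1 + u < b + u" using pq by linarith
    then have "Hf u (q-1) = int a" unfolding Hf_def by simp
    moreover have "d p q \<le> d u q" using d_mono_p[of p u q] pq by simp
    moreover have "d u q \<le> int a" using du[of u q] pq u1 by simp
    ultimately show ?thesis using False x pq u1 eqn[OF pq(3) False, of u] unfolding P_def by simp
  qed
  define r where "r = (LEAST r. P r)"
  have Pr: "P r" using LeastI[of P u] Pu r_def by simp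
  have ru: "r \<le> u" using Least_le[of P u] Pu r_def by simp
  have r1: "1 \<le> r" using Pr P_def by simp
  have below: "e (r-1) (q-1) < x" if "2 \<le> r"
  proof -
    have "\<not> P (r-1)" using not_less_Least[of "r-1" P] r_def that by simp
    moreover have "1 \<le> r - 1" using that by simp
    ultimately show ?thesis unfolding P_def by linarith
  qed
  have xr: "int r \<le> x"
  proof (cases "r = 1")
    case True
    then show ?thesis using c_ge[of p q] pq x by simp
  next
    case False
    then have r2: "2 \<le> r" using r1 by simp
    have "int (r-1) \<le> e (r-1) (q-1)"
    proof (cases "q = 1")
      case True then show ?thesis using au eq1[OF True, of "r-1"] by simp
    next
      case False
      then have q2: "1 \<le> q - 1" "q - 1 \<le> b" "1 \<le> r - 1" using pq r2 by auto
      have "lb (r-1) (q-1) \<le> E (r-1) (q-1)" using E_lb[OF q2(3) q2(1) q2(2)] .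
      moreover have qz: "q - 1 \<noteq> 0" using q2 by linarith
      moreover have "e (r-1) (q-1) = E (r-1) (q-1)" unfolding e_def by (rule if_not_P[OF qz])
      ultimately show ?thesis using lb_ge1[of "r-1" "q-1"] by simp
    qed
    then show ?thesis using below[OF r2] r2 by simp
  qed
  have "E r q \<le> x"
  proof -
    obtain z where z: "z \<in> S r q" "E r q = lb (fst z) (snd z) + int r - int (fst z)"
      using E_in[of r q] r1 pq by auto
    obtain p' q' where zz: "z = (p',q')" by (cases z)
    have p'r: "1 \<le> p'" "p' \<le> r" "1 \<le> q'" "q' \<le> b" "q + p' \<le> q' + r"
      using z zz unfolding S_def by auto
    show ?thesis
    proof (cases "p' < r")
      case True
      then have r2: "2 \<le> r" using p'r by simp
      show ?thesis
      proof (cases "q = 1")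
        case True
        have "e (r-1) (q-1) = int a - int u + int r - 1" using True r2 eq1[OF True, of "r-1"] by (simp add: of_nat_diff)
        with below[OF r2] have "int a - int u + int r \<le> x" by simp
        moreover have "E r q \<le> int a - int u + int r" using E_top r1 pq by simp
        ultimately show ?thesis by simp
      next
        case False
        have "z \<in> S (r-1) (q-1)" using zz p'r True False unfolding S_def by auto
        then have "lb p' q' + int (r-1) - int p' \<le> E (r-1) (q-1)" using E_ge zz by force
        moreover have "e (r-1) (q-1) = E (r-1) (q-1)" using eqn[OF pq(3) False, of "r-1"] .
        ultimately show ?thesis using below[OF r2] z zz r2 by simp
      qed
    next
      case False
      then have pr: "p' = r" using p'r by simp
      then have qq: "q \<le> q'" using p'r by simp
      have c2: "int a - int u + int r \<le> x" if "q' < r"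
      proof -
        have r2: "2 \<le> r" using that p'r qq pq by simp
        show ?thesis
        proof (cases "q = 1")
          case True
          then show ?thesis using below[OF r2] r2 eq1[OF True, of "r-1"] by (simp add: of_nat_diff)
        next
          case False
          have "lb (r-1) (q-1) \<le> E (r-1) (q-1)" by (rule E_lb) (use r2 pq False in auto)
          moreover have "int a - int u + int (r-1) \<le> lb (r-1) (q-1)"
            using lb_ge2[of "q-1" "r-1"] that qq False pq by simp
          ultimately show ?thesis using below[OF r2] r2 eqn[OF pq(3) False, of "r-1"] by (simp add: of_nat_diff)
        qed
      qed
      have c3: "min (Hf r q') (d r (q'+1)) \<le> x" if "q' < b"
      proof (cases "p \<ge> r")
        case True
        have "d r (q'+1) \<le> d p (q'+1)" using d_mono_p[of r p "q'+1"] True r1 pq that by simp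
        moreover have "d p (q'+1) \<le> d p (q+1)" using d_mono_q[of p "q+1" "q'+1"] pq qq that by simp
        moreover have "d p (q+1) \<le> c p q" using h2[of p q] pq qq that by simp
        ultimately show ?thesis using x by simp
      next
        case False
        then have r2: "2 \<le> r" using pq by simp
        show ?thesis
        proof (cases "q = 1")
          case True
          have "d p 1 \<le> int a - int u + int p" using d_le[of p 1] pq by simp
          then show ?thesis using below[OF r2] r2 True x False eq1[OF True, of "r-1"] by (simp add: of_nat_diff)
        next
          case qn1: False
          have "lb (r-1) (q-1) \<le> E (r-1) (q-1)" by (rule E_lb) (use r2 pq qn1 in auto)
          moreover have "min (Hf (r-1) (q-1)) (d (r-1) (q-1+1)) \<le> lb (r-1) (q-1)"
            using lb_ge3[of "q-1" "r-1"] pq by simp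
          moreover have "d p q \<le> d (r-1) q" using d_mono_p[of p "r-1" q] pq False ru by simp
          moreover have "E (r-1) (q-1) < x" using below[OF r2] eqn[OF pq(3) qn1, of "r-1"] by simp
          moreover have "q - 1 + 1 = q" using pq by simp
          ultimately have "min (Hf (r-1) (q-1)) (d (r-1) q) < x" by simp
          then have hx: "Hf (r-1) (q-1) < x"
            using \<open>d p q \<le> d (r-1) q\<close> x by (simp add: min_less_iff_disj)
          have dle: "d p q \<le> int a - int u + int p" using d_le[of p q] pq by simp
          have ncond: "\<not> (q - 1 + u < b + (r-1))"
          proof
            assume cnd: "q - 1 + u < b + (r-1)"
            then have "Hf (r-1) (q-1) = int a - int u + int (r-1)" unfolding Hf_def by simp
            moreover have "int (r-1) = int r - 1" using r2 by simp
            ultimately show False using hx dle x False by simp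
          qed
          have "\<not> (q' + u < b + r)" using ncond qq pq r2 by linarith
          then have "Hf r q' = int r" unfolding Hf_def by simp
          then show ?thesis using xr by simp
        qed
      qed
      have x0: "0 \<le> x" using xr by simp
      have k2: "(if q' < r then int a - int u + int r else 0) \<le> x" using c2 x0 by simp
      have k3: "(if q' < b then min (Hf r q') (d r (q'+1)) else 0) \<le> x" using c3 x0 by simp
      have "lb r q' \<le> x"
        unfolding lb_def using xr k2 k3 by (simp only: max.bounded_iff)
      then show ?thesis using z zz pr by simp
    qed
  qed
  moreover have "x \<le> e r (q-1)" using Pr unfolding P_def by simp
  ultimately show ?thesis using r1 ru by (intro bexI[of _ r]) auto
qed

end


theorem lemma2p9:
  fixes u a b :: nat and c d :: "nat \<Rightarrow> nat \<Rightarrow> int"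
  assumes "u \<ge> 1" and "a \<ge> 1" and "b \<ge> 1"
    and "u \<le> min (a - 1) b"
    and "\<forall>p\<in>{1..u}. \<forall>q\<in>{1..b}. 1 \<le> c p q \<and> c p q \<le> int a"
    and "\<forall>p\<in>{1..u}. \<forall>q\<in>{1..b}. 1 \<le> d p q \<and> d p q \<le> int a"
    and "hyp_ineqs u b c d"
  shows "\<exists>c' d' :: nat \<Rightarrow> nat \<Rightarrow> int.
     (\<forall>p\<in>{1..u}. \<forall>q\<in>{1..b}. d' p q \<ge> c' p q) \<and>
     (\<forall>p\<in>{1..u}. \<forall>q\<in>{1..b}. 2 \<le> p \<longrightarrow> c' p q > d' (p - 1) q) \<and>
     (\<forall>p\<in>{1..u}. \<forall>q\<in>{1..b - 1}. c' p q = d' p (q + 1)) \<and>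
     (\<forall>p\<in>{1..u}. d' p 1 = int a - int u + int p \<and> c' p b = int p) \<and>
     (\<forall>q\<in>{1..b}. col_union u c d q \<subseteq> col_union u c' d' q) \<and>
     ((\<forall>q\<in>{1..b}. col_union u c d q = col_union u c' d' q) \<longrightarrow>
        (\<forall>p\<in>{1..u}. \<forall>q\<in>{1..b}. c p q = c' p q \<and> d p q = d' p q))"
proof -
  have H: "(\<forall>p\<in>{1..u}. \<forall>q\<in>{1..b}. d p q \<ge> c p q)"
     "(\<forall>p\<in>{1..u}. \<forall>q\<in>{1..b}. q + 1 \<le> b \<longrightarrow> c p q \<ge> d p (q + 1))"
     "(\<forall>p\<in>{1..u}. \<forall>q\<in>{1..b}. 2 \<le> p \<longrightarrow> c p q > d (p - 1) q)"
    using assms(7) unfolding hyp_ineqs_def by auto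
  interpret C: cfg u a b c d
  proof
    show "1 \<le> u" using assms by simp
    show "u \<le> a - 1" using assms by simp
    show "u \<le> b" using assms by simp
  next
    fix p q :: nat
    assume "1\<le>p" "p\<le>u" "1\<le>q" "q\<le>b"
    then show "1 \<le> c p q" "d p q \<le> int a" "c p q \<le> d p q" using assms(5,6) H by auto
  next
    fix p q :: nat
    assume "1\<le>p" "p\<le>u" "1\<le>q" "q<b"
    then show "d p (q+1) \<le> c p q" using H by auto
  next
    fix p q :: nat
    assume "2\<le>p" "p\<le>u" "1\<le>q" "q\<le>b"
    then show "d (p-1) q < c p q" using H by auto
  qed
  have au: "int u \<le> int a" using C.au .
  show ?thesis
  proof (cases "(\<forall>p\<in>{1..u}. \<forall>q\<in>{1..b-1}. c p q = d p (q+1)) \<and> (\<forall>p\<in>{1..u}. d p 1 = int a - int u + int p \<and> c p b = int p)")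
    case True
    show ?thesis
      apply (rule exI[of _ c], rule exI[of _ d])
      using True H by auto
  next
    case False
    define c' where "c' = (\<lambda>p q. C.E p q)"
    define d' where "d' = (\<lambda>p q. if q = 1 then int a - int u + int p else C.E p (q-1))"
    have i1: "\<forall>p\<in>{1..u}. \<forall>q\<in>{1..b}. d' p q \<ge> c' p q"
    proof (intro ballI)
      fix p q assume "p \<in> {1..u}" "q \<in> {1..b}"
      then show "d' p q \<ge> c' p q" unfolding c'_def d'_def
        using C.E_top[of p q] C.E_mono[of "q-1" p] by auto
    qed
    have i2: "\<forall>p\<in>{1..u}. \<forall>q\<in>{1..b}. 2 \<le> p \<longrightarrow> c' p q > d' (p - 1) q"
    proof (intro ballI impI)
      fix p q assume a1: "p \<in> {1..u}" "q \<in> {1..b}" "2 \<le> p"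
      show "c' p q > d' (p - 1) q"
      proof (cases "q = 1")
        case True then show ?thesis unfolding c'_def d'_def using C.E_1[of p] a1 by simp
      next
        case False then show ?thesis unfolding c'_def d'_def using C.E_diag[of p q] a1 by simp
      qed
    qed
    have i3: "\<forall>p\<in>{1..u}. \<forall>q\<in>{1..b - 1}. c' p q = d' p (q + 1)"
      unfolding c'_def d'_def by auto
    have i4: "\<forall>p\<in>{1..u}. d' p 1 = int a - int u + int p \<and> c' p b = int p"
      unfolding c'_def d'_def using C.E_b by auto
    have i5: "\<forall>q\<in>{1..b}. col_union u c d q \<subseteq> col_union u c' d' q"
    proof (intro ballI subsetI)
      fix q x assume q: "q \<in> {1..b}" and "x \<in> col_union u c d q"
      then obtain p where p: "p \<in> {1..u}" "c p q \<le> x" "x \<le> d p q" unfolding col_union_def by auto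
      then obtain r where r: "r \<in> {1..u}" "C.E r q \<le> x" "x \<le> C.e r (q-1)"
        using C.cover[of p q x] q by auto
      have "d' r q = C.e r (q-1)" unfolding d'_def C.e_def using q by auto
      then show "x \<in> col_union u c' d' q" unfolding col_union_def c'_def using r by auto
    qed
    have i6: "\<not> (\<forall>q\<in>{1..b}. col_union u c d q = col_union u c' d' q)"
    proof
      assume eq: "\<forall>q\<in>{1..b}. col_union u c d q = col_union u c' d' q"
      have "(\<Sum>q=1..b. int (card (col_union u c' d' q))) = (\<Sum>q=1..b. \<Sum>p=1..u. d' p q - c' p q + 1)"
      proof (rule sum.cong[OF refl])
        fix q assume "q \<in> {1..b}"
        then show "int (card (col_union u c' d' q)) = (\<Sum>p=1..u. d' p q - c' p q + 1)"
          using i1 i2 by (intro card_col) auto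
      qed
      also have "\<dots> = (\<Sum>p=1..u. \<Sum>q=1..b. d' p q - c' p q + 1)" by (rule sum.swap)
      also have "\<dots> = (\<Sum>p=1..u. int a - int u + int b)"
      proof (rule sum.cong[OF refl])
        fix p assume p: "p \<in> {1..u}"
        have "(\<Sum>q=1..b. d' p q - c' p q + 1) = d' p 1 - c' p b + int b - (\<Sum>q=1..b-1. c' p q - d' p (q+1))"
          using telesc'[of b "d' p" "c' p"] assms(3) by simp
        also have "(\<Sum>q=1..b-1. c' p q - d' p (q+1)) = 0" using i3 p by simp
        finally show "(\<Sum>q=1..b. d' p q - c' p q + 1) = int a - int u + int b" using i4 p by simp
      qed
      finally have new: "(\<Sum>q=1..b. int (card (col_union u c' d' q))) = (\<Sum>p=1..u. int a - int u + int b)" .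
      have "(\<Sum>q=1..b. int (card (col_union u c d q))) = (\<Sum>q=1..b. \<Sum>p=1..u. d p q - c p q + 1)"
      proof (rule sum.cong[OF refl])
        fix q assume "q \<in> {1..b}"
        then show "int (card (col_union u c d q)) = (\<Sum>p=1..u. d p q - c p q + 1)"
          using H by (intro card_col) auto
      qed
      also have "\<dots> = (\<Sum>p=1..u. \<Sum>q=1..b. d p q - c p q + 1)" by (rule sum.swap)
      also have "\<dots> < (\<Sum>p=1..u. int a - int u + int b)"
      proof (rule sum_strict_mono_ex1)
        show "finite {1..u}" by simp
        have row: "(\<Sum>q=1..b. d p q - c p q + 1) = d p 1 - c p b + int b - (\<Sum>q=1..b-1. c p q - d p (q+1))" for p
          using telesc'[of b "d p" "c p"] assms(3) by simp
        have gap: "0 \<le> c p q - d p (q+1)" if "p \<in> {1..u}" "q \<in> {1..b-1}" for p q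
          using C.h2[of p q] that by auto
        have gs: "0 \<le> (\<Sum>q=1..b-1. c p q - d p (q+1))" if "p \<in> {1..u}" for p
          using gap that by (intro sum_nonneg) auto
        have bd: "d p 1 \<le> int a - int u + int p" "int p \<le> c p b" if "p \<in> {1..u}" for p
          using C.d_le[of p 1] C.c_ge[of p b] that assms(3) by auto
        show "\<forall>p\<in>{1..u}. (\<Sum>q=1..b. d p q - c p q + 1) \<le> int a - int u + int b"
          using row gs bd by fastforce
        have "\<exists>p\<in>{1..u}. (\<exists>q\<in>{1..b-1}. c p q \<noteq> d p (q+1)) \<or> d p 1 \<noteq> int a - int u + int p \<or> c p b \<noteq> int p"
          using False by blast
        then obtain p where p: "p \<in> {1..u}"
          and alt: "(\<exists>q\<in>{1..b-1}. c p q \<noteq> d p (q+1)) \<or> d p 1 \<noteq> int a - int u + int p \<or> c p b \<noteq> int p"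
          by blast
        have "(\<Sum>q=1..b. d p q - c p q + 1) < int a - int u + int b"
        proof -
          consider (g) q where "q\<in>{1..b-1}" "c p q \<noteq> d p (q+1)" | (t) "d p 1 \<noteq> int a - int u + int p"
            | (s) "c p b \<noteq> int p" using alt by blast
          then show ?thesis
          proof cases
            case g
            have "c p q - d p (q+1) \<le> (\<Sum>q=1..b-1. c p q - d p (q+1))"
              using g gap[OF p] by (intro member_le_sum) auto
            moreover have "0 < c p q - d p (q+1)" using g gap[OF p, of q] by simp
            ultimately show ?thesis using row[of p] bd[OF p] by simp
          next
            case t then show ?thesis using row[of p] bd[OF p] gs[OF p] by simp
          next
            case s then show ?thesis using row[of p] bd[OF p] gs[OF p] by simp
          qed
        qed
        then show "\<exists>p\<in>{1..u}. (\<Sum>q=1..b. d p q - c p q + 1) < int a - int u + int b"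
          using p by blast
      qed
      finally have "(\<Sum>q=1..b. int (card (col_union u c d q))) < (\<Sum>p=1..u. int a - int u + int b)" .
      moreover have "(\<Sum>q=1..b. int (card (col_union u c d q))) = (\<Sum>q=1..b. int (card (col_union u c' d' q)))"
        using eq by simp
      ultimately show False using new by simp
    qed
    show ?thesis
      apply (rule exI[of _ c'], rule exI[of _ d'])
      using i1 i2 i3 i4 i5 i6 by blast
  qed
qed

end
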